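(* Let $G$ be a graph and $r>2$ an integer. Then $$\rho_o(G)\leq \rho_o(G\square K_r)\leq \alpha_2(G).$$ Moreover, if $G$ is triangle-free and there is an $\alpha_2(G)$-set $S$ with $\chi(G/S)\leq r$, then $\rho_o(G\square K_r)=\alpha_2(G)$.
   Context: All graphs are finite and simple. An open packing of $G$ is a set $P\subseteq V(G)$ whose vertices have pairwise disjoint open neighborhoods; $\rho_o(G)$ is the maximum size of an open packing. A set $S\subseteq V(G)$ is $2$-independent if the induced subgraph $G[S]$ has maximum degree less than $2$ (i.e., $G[S]$ consists of isolated vertices and isolated edges); $\alpha_2(G)$ is the maximum size of a $2$-independent set, and an $\alpha_2(G)$-set is a $2$-independent set of that size. For a $2$-independent set $S$, the graph $G/S$ has as vertices the connected components of $G[S]$, two components $C,C'$ being adjacent iff $d_G(C,C')=2$, where $d_G(C,C')=\min\{d_G(x,y): x\in V(C), y\in V(C')\}$. $\chi$ denotes chromatic number, $K_r$ the complete graph on $r$ vertices. The Cartesian product $G\square H$ has vertex set $V(G)\times V(H)$, with $(g,h)$ adjacent to $(g',h')$ iff ($gg'\in E(G)$ and $h=h'$) or ($g=g'$ and $hh'\in E(H)$). *)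

theory Defs
  imports Main "HOL-Library.Extended_Nat"
begin

type_synonym 'a graph = "'a set \<times> ('a \<Rightarrow> 'a \<Rightarrow> bool)"

definition verts :: "'a graph \<Rightarrow> 'a set" where "verts G = fst G"
definition adj :: "'a graph \<Rightarrow> 'a \<Rightarrow> 'a \<Rightarrow> bool" where
  "adj G x y = (x \<in> verts G \<and> y \<in> verts G \<and> snd G x y)"

definition simple_graph :: "'a graph \<Rightarrow> bool" where
  "simple_graph G \<longleftrightarrow> finite (verts G) \<and>
     (\<forall>x y. snd G x y \<longrightarrow> x \<in> verts G \<and> y \<in> verts G) \<and>
     (\<forall>x y. snd G x y \<longrightarrow> snd G y x) \<and> (\<forall>x. \<not> snd G x x)"

definition open_nbhd :: "'a graph \<Rightarrow> 'a \<Rightarrow> 'a set" where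
  "open_nbhd G v = {u. adj G v u}"

definition open_packing :: "'a graph \<Rightarrow> 'a set \<Rightarrow> bool" where
  "open_packing G P \<longleftrightarrow> P \<subseteq> verts G \<and>
     (\<forall>x\<in>P. \<forall>y\<in>P. x \<noteq> y \<longrightarrow> open_nbhd G x \<inter> open_nbhd G y = {})"

definition rho_o :: "'a graph \<Rightarrow> nat" where
  "rho_o G = Max (card ` {P. open_packing G P})"

definition two_indep :: "'a graph \<Rightarrow> 'a set \<Rightarrow> bool" where
  "two_indep G S \<longleftrightarrow> S \<subseteq> verts G \<and> (\<forall>x\<in>S. card {y\<in>S. adj G x y} < 2)"

definition alpha2 :: "'a graph \<Rightarrow> nat" where
  "alpha2 G = Max (card ` {S. two_indep G S})"

definition alpha2_set :: "'a graph \<Rightarrow> 'a set \<Rightarrow> bool" where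
  "alpha2_set G S \<longleftrightarrow> two_indep G S \<and> card S = alpha2 G"

text \<open>Walks and distance (as extended natural; \<infinity> if no walk).\<close>
definition walk :: "'a graph \<Rightarrow> 'a list \<Rightarrow> bool" where
  "walk G xs \<longleftrightarrow> xs \<noteq> [] \<and> set xs \<subseteq> verts G \<and>
     (\<forall>i. Suc i < length xs \<longrightarrow> adj G (xs ! i) (xs ! Suc i))"

definition gdist :: "'a graph \<Rightarrow> 'a \<Rightarrow> 'a \<Rightarrow> enat" where
  "gdist G x y = Inf {enat (length xs - 1) | xs. walk G xs \<and> hd xs = x \<and> last xs = y}"

definition set_dist :: "'a graph \<Rightarrow> 'a set \<Rightarrow> 'a set \<Rightarrow> enat" where
  "set_dist G A B = Inf {gdist G x y | x y. x \<in> A \<and> y \<in> B}"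

definition induced_comps :: "'a graph \<Rightarrow> 'a set \<Rightarrow> 'a set set" where
  "induced_comps G S = {{y \<in> S. (\<lambda>a b. a \<in> S \<and> b \<in> S \<and> adj G a b)\<^sup>*\<^sup>* x y} | x. x \<in> S}"

definition quot_graph :: "'a graph \<Rightarrow> 'a set \<Rightarrow> 'a set graph" where
  "quot_graph G S = (induced_comps G S,
     \<lambda>C C'. C \<in> induced_comps G S \<and> C' \<in> induced_comps G S \<and> set_dist G C C' = 2)"

definition proper_colouring :: "'a graph \<Rightarrow> nat \<Rightarrow> ('a \<Rightarrow> nat) \<Rightarrow> bool" where
  "proper_colouring G k f \<longleftrightarrow> (\<forall>v\<in>verts G. f v < k) \<and> (\<forall>u v. adj G u v \<longrightarrow> f u \<noteq> f v)"

definition chromatic_number :: "'a graph \<Rightarrow> nat" where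
  "chromatic_number G = (LEAST k. \<exists>f. proper_colouring G k f)"

definition complete_graph :: "nat \<Rightarrow> nat graph" where
  "complete_graph r = ({0..<r}, \<lambda>i j. i < r \<and> j < r \<and> i \<noteq> j)"

definition cart_prod :: "'a graph \<Rightarrow> 'b graph \<Rightarrow> ('a \<times> 'b) graph" where
  "cart_prod G H = (verts G \<times> verts H,
     \<lambda>(g,h) (g',h'). (adj G g g' \<and> h = h' \<and> h \<in> verts H) \<or> (g = g' \<and> g \<in> verts G \<and> adj H h h'))"

definition triangle_free :: "'a graph \<Rightarrow> bool" where
  "triangle_free G \<longleftrightarrow> \<not> (\<exists>x y z. adj G x y \<and> adj G y z \<and> adj G x z)"

end

theory Submission
  imports Defs
begin

lemma adjH: "adj (cart_prod G (complete_graph r)) (g,i) (g',j) \<longleftrightarrow>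
  (adj G g g' \<and> i = j \<and> i < r) \<or> (g = g' \<and> g \<in> verts G \<and> i < r \<and> j < r \<and> i \<noteq> j)"
  by (auto simp: adj_def cart_prod_def verts_def complete_graph_def)

lemma vertsH: "verts (cart_prod G (complete_graph r)) = verts G \<times> {0..<r}"
  by (simp add: cart_prod_def verts_def complete_graph_def)

lemma open_packing_iff: "open_packing G P \<longleftrightarrow> P \<subseteq> verts G \<and>
   (\<forall>x\<in>P. \<forall>y\<in>P. x \<noteq> y \<longrightarrow> \<not>(\<exists>z. adj G x z \<and> adj G y z))"
  unfolding open_packing_def open_nbhd_def by auto

lemma adj_sym: "simple_graph G \<Longrightarrow> adj G x y \<Longrightarrow> adj G y x"
  by (auto simp: simple_graph_def adj_def)

lemma adj_irr: "simple_graph G \<Longrightarrow> \<not> adj G x x"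
  by (auto simp: simple_graph_def adj_def)

lemma adj_verts: "adj G x y \<Longrightarrow> x \<in> verts G \<and> y \<in> verts G"
  by (auto simp: adj_def)

lemma rho_o_ge: assumes "finite (verts G)" "open_packing G P" shows "card P \<le> rho_o G"
proof -
  have "{P. open_packing G P} \<subseteq> Pow (verts G)" by (auto simp: open_packing_def)
  hence "finite {P. open_packing G P}" using assms(1) finite_subset by blast
  thus ?thesis unfolding rho_o_def using assms(2) by (intro Max_ge) auto
qed

lemma rho_o_le: assumes "finite (verts G)" "\<And>P. open_packing G P \<Longrightarrow> card P \<le> n" shows "rho_o G \<le> n"
proof -
  have "{P. open_packing G P} \<subseteq> Pow (verts G)" by (auto simp: open_packing_def)
  hence "finite {P. open_packing G P}" using assms(1) finite_subset by blast
  moreover have "open_packing G {}" by (simp add: open_packing_def)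
  ultimately show ?thesis unfolding rho_o_def using assms(2) by (subst Max_le_iff) auto
qed

lemma alpha2_ge: assumes "finite (verts G)" "two_indep G S" shows "card S \<le> alpha2 G"
proof -
  have "{P. two_indep G P} \<subseteq> Pow (verts G)" by (auto simp: two_indep_def)
  hence "finite {P. two_indep G P}" using assms(1) finite_subset by blast
  thus ?thesis unfolding alpha2_def using assms(2) by (intro Max_ge) auto
qed

lemma part1: assumes sg: "simple_graph G" and r: "r > 0"
  shows "rho_o G \<le> rho_o (cart_prod G (complete_graph r))"
proof (rule rho_o_le)
  show fin: "finite (verts G)" using sg by (simp add: simple_graph_def)
  fix P assume P: "open_packing G P"
  let ?Q = "(\<lambda>g. (g, 0::nat)) ` P"
  have "open_packing (cart_prod G (complete_graph r)) ?Q"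
    using P r unfolding open_packing_iff vertsH
    by (auto simp: adjH)
  hence "card ?Q \<le> rho_o (cart_prod G (complete_graph r))"
    by (intro rho_o_ge) (auto simp: vertsH fin)
  moreover have "card ?Q = card P" by (rule card_image) (auto simp: inj_on_def)
  ultimately show "card P \<le> rho_o (cart_prod G (complete_graph r))" by simp
qed

lemma two_elems: assumes "finite A" "\<not> card A < 2" obtains x y where "x \<in> A" "y \<in> A" "x \<noteq> y"
proof -
  have "\<not> card A \<le> Suc 0" using assms(2) by simp
  then show ?thesis using card_le_Suc0_iff_eq[OF assms(1)] that by blast
qed

lemma part2: assumes sg: "simple_graph G" and r: "r > 2"
  shows "rho_o (cart_prod G (complete_graph r)) \<le> alpha2 G"
proof (rule rho_o_le)
  have fin: "finite (verts G)" using sg by (simp add: simple_graph_def)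
  show "finite (verts (cart_prod G (complete_graph r)))" by (simp add: vertsH fin)
  fix P assume P: "open_packing (cart_prod G (complete_graph r)) P"
  have PV: "P \<subseteq> verts G \<times> {0..<r}" using P by (simp add: open_packing_iff vertsH)
  have nz: "\<And>p q z. p \<in> P \<Longrightarrow> q \<in> P \<Longrightarrow> adj (cart_prod G (complete_graph r)) p z
      \<Longrightarrow> adj (cart_prod G (complete_graph r)) q z \<Longrightarrow> p = q"
    using P unfolding open_packing_iff by blast
  have inj: "inj_on fst P"
  proof (rule inj_onI)
    fix p q assume pq: "p \<in> P" "q \<in> P" "fst p = fst q"
    obtain g i where p: "p = (g,i)" by (cases p)
    obtain j where q: "q = (g,j)" using pq p by (cases q) auto
    show "p = q"
    proof (rule ccontr)
      assume "p \<noteq> q"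
      hence ij: "i \<noteq> j" using p q by simp
      have "i < r" "j < r" "g \<in> verts G" using PV pq p q by auto
      obtain k where k: "k < r" "k \<noteq> i" "k \<noteq> j"
      proof (cases "0 \<noteq> i \<and> 0 \<noteq> j")
        case True then show ?thesis using that[of 0] r by auto
      next
        case False
        show ?thesis
        proof (cases "1 \<noteq> i \<and> 1 \<noteq> j")
          case True then show ?thesis using that[of 1] r by auto
        next
          case False2: False
          have "2 \<noteq> i \<and> 2 \<noteq> j" using False False2 ij by auto
          then show ?thesis using that[of 2] r by auto
        qed
      qed
      have "adj (cart_prod G (complete_graph r)) p (g,k)" "adj (cart_prod G (complete_graph r)) q (g,k)"
        using p q k \<open>i<r\<close> \<open>j<r\<close> \<open>g \<in> verts G\<close> by (auto simp: adjH)
      thus False using nz pq \<open>p \<noteq> q\<close> by blast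
    qed
  qed
  let ?S = "fst ` P"
  have "two_indep G ?S"
    unfolding two_indep_def
  proof (intro conjI ballI)
    show "?S \<subseteq> verts G" using PV by auto
    fix g assume "g \<in> ?S"
    then obtain i where gi: "(g,i) \<in> P" by auto
    have finS: "finite {y \<in> ?S. adj G g y}"
      using fin PV by (intro finite_subset[OF _ fin]) auto
    show "card {y \<in> ?S. adj G g y} < 2"
    proof (rule ccontr)
      assume "\<not> card {y \<in> ?S. adj G g y} < 2"
      then obtain g1 g2 where g0: "g1 \<in> {y \<in> ?S. adj G g y}" "g2 \<in> {y \<in> ?S. adj G g y}" "g1 \<noteq> g2"
        by (rule two_elems[OF finS])
      hence g12: "g1 \<in> ?S" "adj G g g1" "g2 \<in> ?S" "adj G g g2" "g1 \<noteq> g2" by auto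
      obtain i1 where i1: "(g1,i1) \<in> P" using g12 by auto
      obtain i2 where i2: "(g2,i2) \<in> P" using g12 by auto
      have ir: "i < r" "i1 < r" "i2 < r" using PV gi i1 i2 by auto
      have "g \<noteq> g1" "g \<noteq> g2" using g12 adj_irr[OF sg] by auto
      have gv: "g \<in> verts G" "g1 \<in> verts G" "g2 \<in> verts G" using adj_verts[OF g12(2)] adj_verts[OF g12(4)] by auto
      have e1: "i1 = i"
      proof (rule ccontr)
        assume "i1 \<noteq> i"
        have a: "adj (cart_prod G (complete_graph r)) (g,i) (g1,i)"
          using g12(2) ir(1) by (simp add: adjH)
        have b: "adj (cart_prod G (complete_graph r)) (g1,i1) (g1,i)"
          using gv ir \<open>i1 \<noteq> i\<close> by (simp add: adjH)
        have "(g,i) = (g1,i1)" by (rule nz[OF gi i1 a b])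
        thus False using \<open>g \<noteq> g1\<close> by simp
      qed
      have e2: "i2 = i"
      proof (rule ccontr)
        assume "i2 \<noteq> i"
        have a: "adj (cart_prod G (complete_graph r)) (g,i) (g2,i)"
          using g12(4) ir(1) by (simp add: adjH)
        have b: "adj (cart_prod G (complete_graph r)) (g2,i2) (g2,i)"
          using gv ir \<open>i2 \<noteq> i\<close> by (simp add: adjH)
        have "(g,i) = (g2,i2)" by (rule nz[OF gi i2 a b])
        thus False using \<open>g \<noteq> g2\<close> by simp
      qed
      have a: "adj (cart_prod G (complete_graph r)) (g1,i) (g,i)"
        using adj_sym[OF sg g12(2)] ir(1) by (simp add: adjH)
      have b: "adj (cart_prod G (complete_graph r)) (g2,i) (g,i)"
        using adj_sym[OF sg g12(4)] ir(1) by (simp add: adjH)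
      have i1': "(g1,i) \<in> P" using i1 e1 by simp
      have i2': "(g2,i) \<in> P" using i2 e2 by simp
      have "(g1,i) = (g2,i)" by (rule nz[OF i1' i2' a b])
      thus False using g12(5) by simp
    qed
  qed
  hence "card ?S \<le> alpha2 G" by (rule alpha2_ge[OF fin])
  thus "card P \<le> alpha2 G" using card_image[OF inj] by simp
qed

lemma gdist_refl: assumes "x \<in> verts G" shows "gdist G x x = 0"
proof -
  have "walk G [x]" using assms by (simp add: walk_def)
  hence "gdist G x x \<le> enat (length [x] - 1)" unfolding gdist_def by (intro Inf_lower) force
  thus ?thesis by (simp add: zero_enat_def[symmetric])
qed

lemma gdist_2: assumes "adj G v x" "adj G x w" shows "gdist G v w \<le> 2"
proof -
  have vs: "v \<in> verts G" "x \<in> verts G" "w \<in> verts G" using assms adj_verts by metis+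
  have "walk G [v,x,w]" unfolding walk_def
  proof (intro conjI allI impI)
    fix i assume "Suc i < length [v,x,w]"
    hence "i = 0 \<or> i = 1" by auto
    thus "adj G ([v,x,w] ! i) ([v,x,w] ! Suc i)" using assms by auto
  qed (use vs in auto)
  hence "gdist G v w \<le> enat (length [v,x,w] - 1)" unfolding gdist_def by (intro Inf_lower) force
  thus ?thesis by (simp add: numeral_eq_enat eval_nat_numeral)
qed

lemma gdist_ge2: assumes "x \<noteq> y" "\<not> adj G x y" shows "2 \<le> gdist G x y"
  unfolding gdist_def
proof (rule Inf_greatest)
  fix d assume "d \<in> {enat (length xs - 1) |xs. walk G xs \<and> hd xs = x \<and> last xs = y}"
  then obtain xs where d: "d = enat (length xs - 1)" and w: "walk G xs" "hd xs = x" "last xs = y" by blast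
  have ne: "xs \<noteq> []" using w by (simp add: walk_def)
  have "length xs \<ge> 3"
  proof (rule ccontr)
    assume "\<not> length xs \<ge> 3"
    moreover have "length xs \<noteq> 0" using ne by simp
    ultimately have "length xs = 1 \<or> length xs = 2" by linarith
    thus False
    proof
      assume l: "length xs = 1"
      hence "hd xs = last xs" using ne by (simp add: hd_conv_nth last_conv_nth)
      thus False using w assms by simp
    next
      assume l: "length xs = 2"
      have "adj G (xs ! 0) (xs ! Suc 0)" using w l by (simp add: walk_def)
      moreover have "hd xs = xs ! 0" "last xs = xs ! Suc 0" using ne l by (simp_all add: hd_conv_nth last_conv_nth)
      ultimately show False using w assms by simp
    qed
  qed
  thus "2 \<le> d" using d by (simp add: numeral_eq_enat)
qed

lemma part3:
  assumes sg: "simple_graph G" and tf: "triangle_free G" and AS: "alpha2_set G S"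
    and chi: "chromatic_number (quot_graph G S) \<le> r"
  shows "alpha2 G \<le> rho_o (cart_prod G (complete_graph r))"
proof -
  define R where "R = (\<lambda>a b. a \<in> S \<and> b \<in> S \<and> adj G a b)"
  define comp where "comp = (\<lambda>x. {y \<in> S. R\<^sup>*\<^sup>* x y})"
  have fin: "finite (verts G)" using sg by (simp add: simple_graph_def)
  have ti: "two_indep G S" and cardS: "card S = alpha2 G" using AS by (auto simp: alpha2_set_def)
  have SV: "S \<subseteq> verts G" using ti by (simp add: two_indep_def)
  have finS: "finite S" using fin SV finite_subset by blast
  have comps: "induced_comps G S = comp ` S" unfolding induced_comps_def comp_def R_def by auto
  have symR: "\<And>a b. R a b \<Longrightarrow> R b a" using adj_sym[OF sg] unfolding R_def by blast
  have symRs: "\<And>a b. R\<^sup>*\<^sup>* a b \<Longrightarrow> R\<^sup>*\<^sup>* b a"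
  proof -
    fix a b assume "R\<^sup>*\<^sup>* a b" thus "R\<^sup>*\<^sup>* b a"
      by (induction rule: rtranclp_induct) (auto intro: converse_rtranclp_into_rtranclp symR)
  qed
  have small: "\<And>v w. R\<^sup>*\<^sup>* v w \<Longrightarrow> v = w \<or> R v w"
  proof -
    fix v w assume "R\<^sup>*\<^sup>* v w" thus "v = w \<or> R v w"
    proof (induction rule: rtranclp_induct)
      case base then show ?case by simp
    next
      case (step y z)
      show ?case
      proof (cases "v = y")
        case True then show ?thesis using step by simp
      next
        case False
        hence "R v y" using step by simp
        show ?thesis
        proof (rule ccontr)
          assume "\<not> (v = z \<or> R v z)"
          hence "v \<noteq> z" by simp
          have "y \<in> S" using \<open>R v y\<close> R_def by simp
          have sub: "{v, z} \<subseteq> {x\<in>S. adj G y x}" using \<open>R v y\<close> \<open>R y z\<close> symR R_def by auto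
          have "card {v,z} \<le> card {x\<in>S. adj G y x}" using sub finS by (intro card_mono) auto
          moreover have "card {x\<in>S. adj G y x} < 2" using ti \<open>y\<in>S\<close> by (simp add: two_indep_def)
          ultimately show False using \<open>v \<noteq> z\<close> by simp
        qed
      qed
    qed
  qed
  have compeq: "\<And>v w. R v w \<Longrightarrow> comp v = comp w"
    unfolding comp_def using symR by (auto intro: converse_rtranclp_into_rtranclp)
  have vq: "verts (quot_graph G S) = comp ` S" using comps by (simp add: quot_graph_def verts_def)
  have aq: "\<And>C C'. adj (quot_graph G S) C C' \<longleftrightarrow> C \<in> comp ` S \<and> C' \<in> comp ` S \<and> set_dist G C C' = 2"
    using comps by (auto simp: quot_graph_def adj_def verts_def)
  have incomp: "\<And>x. x \<in> S \<Longrightarrow> x \<in> comp x" unfolding comp_def by simp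
  have dist0: "\<And>x. x \<in> S \<Longrightarrow> set_dist G (comp x) (comp x) \<noteq> 2"
  proof -
    fix x assume x: "x \<in> S"
    have "set_dist G (comp x) (comp x) \<le> gdist G x x"
      unfolding set_dist_def using incomp[OF x] by (intro Inf_lower) blast
    also have "\<dots> = 0" by (rule gdist_refl) (use x SV in blast)
    finally have "set_dist G (comp x) (comp x) = 0" by simp
    thus "set_dist G (comp x) (comp x) \<noteq> 2" by simp
  qed
  have "\<exists>k f. proper_colouring (quot_graph G S) k f"
  proof -
    have "finite (comp ` S)" using finS by simp
    then obtain h where h: "bij_betw h (comp ` S) {0..<card (comp ` S)}"
      using ex_bij_betw_finite_nat by blast
    have "proper_colouring (quot_graph G S) (card (comp ` S)) h"
      unfolding proper_colouring_def
    proof (intro conjI ballI allI impI)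
      fix v assume "v \<in> verts (quot_graph G S)"
      thus "h v < card (comp ` S)" using h vq by (auto simp: bij_betw_def)
    next
      fix u v assume "adj (quot_graph G S) u v"
      hence uv: "u \<in> comp ` S" "v \<in> comp ` S" "set_dist G u v = 2" using aq by auto
      hence "u \<noteq> v" using dist0 by auto
      thus "h u \<noteq> h v" using h uv by (auto simp: bij_betw_def inj_on_def)
    qed
    thus ?thesis by blast
  qed
  hence "\<exists>f. proper_colouring (quot_graph G S) (chromatic_number (quot_graph G S)) f"
    unfolding chromatic_number_def by (rule LeastI_ex)
  then obtain f where f: "proper_colouring (quot_graph G S) (chromatic_number (quot_graph G S)) f" by blast
  have fr: "\<And>x. x \<in> S \<Longrightarrow> f (comp x) < r"
    using f chi vq unfolding proper_colouring_def by fastforce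
  have fadj: "\<And>x y. x \<in> S \<Longrightarrow> y \<in> S \<Longrightarrow> set_dist G (comp x) (comp y) = 2 \<Longrightarrow> f (comp x) \<noteq> f (comp y)"
    using f aq unfolding proper_colouring_def by blast
  have d2: "\<And>v w x. v \<in> S \<Longrightarrow> w \<in> S \<Longrightarrow> v \<noteq> w \<Longrightarrow> \<not> adj G v w \<Longrightarrow> adj G v x \<Longrightarrow> adj G w x
      \<Longrightarrow> set_dist G (comp v) (comp w) = 2"
  proof -
    fix v w x assume vw: "v \<in> S" "w \<in> S" "v \<noteq> w" "\<not> adj G v w" "adj G v x" "adj G w x"
    have nR: "\<not> R\<^sup>*\<^sup>* v w" using small vw R_def by blast
    have ge: "2 \<le> set_dist G (comp v) (comp w)"
      unfolding set_dist_def
    proof (rule Inf_greatest)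
      fix d assume "d \<in> {gdist G x y |x y. x \<in> comp v \<and> y \<in> comp w}"
      then obtain a b where d: "d = gdist G a b" and ab: "a \<in> comp v" "b \<in> comp w" by blast
      have ra: "R\<^sup>*\<^sup>* v a" "a \<in> S" and rb: "R\<^sup>*\<^sup>* b w" "b \<in> S" using ab symRs unfolding comp_def by auto
      have "a \<noteq> b" using ra rb nR by (metis rtranclp_trans)
      moreover have "\<not> adj G a b"
      proof
        assume "adj G a b"
        hence "R a b" using ra rb R_def by simp
        hence "R\<^sup>*\<^sup>* v w" using ra rb by (meson rtranclp.rtrancl_into_rtrancl rtranclp_trans)
        thus False using nR by simp
      qed
      ultimately have "2 \<le> gdist G a b" by (rule gdist_ge2)
      thus "2 \<le> d" using d by simp
    qed
    have "set_dist G (comp v) (comp w) \<le> gdist G v w"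
      unfolding set_dist_def using incomp vw by (intro Inf_lower) blast
    also have "\<dots> \<le> 2" using gdist_2[OF vw(5) adj_sym[OF sg vw(6)]] .
    finally show "set_dist G (comp v) (comp w) = 2" using ge by simp
  qed
  define P where "P = (\<lambda>v. (v, f (comp v))) ` S"
  have "open_packing (cart_prod G (complete_graph r)) P"
    unfolding open_packing_iff
  proof (intro conjI ballI impI notI)
    show "P \<subseteq> verts (cart_prod G (complete_graph r))"
      using SV fr unfolding P_def vertsH by auto
  next
    fix p q assume pq: "p \<in> P" "q \<in> P" "p \<noteq> q"
      and ex: "\<exists>z. adj (cart_prod G (complete_graph r)) p z \<and> adj (cart_prod G (complete_graph r)) q z"
    obtain v where v: "v \<in> S" "p = (v, f (comp v))" using pq P_def by blast
    obtain w where w: "w \<in> S" "q = (w, f (comp w))" using pq P_def by blast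
    have vw: "v \<noteq> w" using pq v w by auto
    obtain x c where z: "adj (cart_prod G (complete_graph r)) (v, f (comp v)) (x,c)"
      "adj (cart_prod G (complete_graph r)) (w, f (comp w)) (x,c)" using ex v w by auto
    show False
    proof (cases "adj G v x")
      case vx: True
      show ?thesis
      proof (cases "adj G w x")
        case wx: True
        have eq: "f (comp v) = f (comp w)" using z vx wx adj_irr[OF sg] by (auto simp: adjH)
        show ?thesis
        proof (cases "adj G v w")
          case True
          thus ?thesis using tf vx wx unfolding triangle_free_def by blast
        next
          case False
          thus ?thesis using d2[OF v(1) w(1) vw False vx wx] fadj v(1) w(1) eq by blast
        qed
      next
        case wx: False
        have "x = w" "adj G v w" using z vx wx by (auto simp: adjH)
        hence "comp v = comp w" using compeq R_def v w by blast
        thus ?thesis using vw v w pq z \<open>x = w\<close> vx adj_irr[OF sg] by (auto simp: adjH)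
      qed
    next
      case vx: False
      hence "x = v" using z by (auto simp: adjH)
      show ?thesis
      proof (cases "adj G w x")
        case wx: True
        hence "comp v = comp w" using compeq R_def v w \<open>x = v\<close> adj_sym[OF sg] by metis
        thus ?thesis using z \<open>x = v\<close> wx adj_irr[OF sg] by (auto simp: adjH)
      next
        case False
        thus ?thesis using z \<open>x = v\<close> vw by (auto simp: adjH)
      qed
    qed
  qed
  hence "card P \<le> rho_o (cart_prod G (complete_graph r))"
    by (intro rho_o_ge) (auto simp: vertsH fin)
  moreover have "card P = card S" unfolding P_def by (rule card_image) (auto simp: inj_on_def)
  ultimately show ?thesis using cardS by simp
qed

theorem mainTheorem6:
  fixes G :: "'a graph" and r :: nat
  assumes "simple_graph G" and "r > 2"
  shows "rho_o G \<le> rho_o (cart_prod G (complete_graph r))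
       \<and> rho_o (cart_prod G (complete_graph r)) \<le> alpha2 G
       \<and> ((triangle_free G \<and> (\<exists>S. alpha2_set G S \<and> chromatic_number (quot_graph G S) \<le> r))
            \<longrightarrow> rho_o (cart_prod G (complete_graph r)) = alpha2 G)"
proof -
  have a: "rho_o G \<le> rho_o (cart_prod G (complete_graph r))" using part1[OF assms(1)] assms(2) by simp
  have b: "rho_o (cart_prod G (complete_graph r)) \<le> alpha2 G" using part2[OF assms] .
  have c: "(triangle_free G \<and> (\<exists>S. alpha2_set G S \<and> chromatic_number (quot_graph G S) \<le> r))
            \<longrightarrow> rho_o (cart_prod G (complete_graph r)) = alpha2 G"
    using part3[OF assms(1)] b by (meson antisym)
  show ?thesis using a b c by blast
qed

end
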